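(* For $k=o(n)$, $\mathsf{m}^{rd}(+\infty,S_{n,k})=\frac{1+o_k(1)}{2\sqrt{k}}$.
   Context: $S_{n,k}\in\{0,1\}^{\binom{n}{k}\times n}$ is the matrix whose rows are all the distinct vectors in $\{0,1\}^n$ with exactly $k$ ones, each appearing exactly once. For $A\in\{0,1\}^{N\times n}$ and $m\ge0$, unit vectors $U_1,\dots,U_N,V_1,\dots,V_n\in\mathbb{R}^d$ form a margin-$m$, relative-bias-$0$ embedding of $A$ if $\langle U_j,V_i\rangle\ge m$ whenever $A_{ji}=1$ and $\langle U_j,V_i\rangle\le -m$ whenever $A_{ji}=0$. $\mathsf{m}^{rd}(d,A)$ is the supremum of such $m$ in dimension $d$ ($-\infty$ if none), and $\mathsf{m}^{rd}(+\infty,A)=\sup_d\mathsf{m}^{rd}(d,A)$. *)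

theory Defs
  imports Complex_Main "HOL-Library.Extended_Real"
begin

(* Vectors in R^d are represented as functions nat => real; only coordinates < d matter. *)
definition dinner :: "nat \<Rightarrow> (nat \<Rightarrow> real) \<Rightarrow> (nat \<Rightarrow> real) \<Rightarrow> real" where
  "dinner d u v = (\<Sum>i<d. u i * v i)"

definition unitvec :: "nat \<Rightarrow> (nat \<Rightarrow> real) \<Rightarrow> bool" where
  "unitvec d u \<longleftrightarrow> dinner d u u = 1"

(* A 0/1 matrix with row index set R and columns {..<n}; A j i = True means entry 1.
   Margin-m, relative-bias-0 embedding in dimension d. *)
definition rd_embedding ::
  "nat \<Rightarrow> 'r set \<Rightarrow> nat \<Rightarrow> ('r \<Rightarrow> nat \<Rightarrow> bool) \<Rightarrow> real \<Rightarrow> bool" where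
  "rd_embedding d R n A m \<longleftrightarrow> m \<ge> 0 \<and>
     (\<exists>U V. (\<forall>j\<in>R. unitvec d (U j)) \<and> (\<forall>i<n. unitvec d (V i)) \<and>
        (\<forall>j\<in>R. \<forall>i<n. (A j i \<longrightarrow> dinner d (U j) (V i) \<ge> m) \<and>
                        (\<not> A j i \<longrightarrow> dinner d (U j) (V i) \<le> - m)))"

(* m^rd(d,A): supremum of achievable margins; Sup {} = -\<infinity> in ereal. *)
definition m_rd :: "nat \<Rightarrow> 'r set \<Rightarrow> nat \<Rightarrow> ('r \<Rightarrow> nat \<Rightarrow> bool) \<Rightarrow> ereal" where
  "m_rd d R n A = Sup (ereal ` {m. rd_embedding d R n A m})"

definition m_rd_inf :: "'r set \<Rightarrow> nat \<Rightarrow> ('r \<Rightarrow> nat \<Rightarrow> bool) \<Rightarrow> ereal" where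
  "m_rd_inf R n A = (SUP d. m_rd d R n A)"

(* S_{n,k}: rows are exactly the k-subsets of {..<n} (each once), entry (S,i) is 1 iff i \<in> S. *)
definition S_rows :: "nat \<Rightarrow> nat \<Rightarrow> nat set set" where
  "S_rows n k = {S. S \<subseteq> {..<n} \<and> card S = k}"

definition S_mat :: "nat set \<Rightarrow> nat \<Rightarrow> bool" where
  "S_mat S i \<longleftrightarrow> i \<in> S"

end

theory Submission
  imports Defs "HOL-Analysis.Convex"
begin

lemma count1:
  assumes "finite A" "x \<in> A" "1 \<le> k"
  shows "card {S. S \<subseteq> A \<and> card S = k \<and> x \<in> S \<and> Q S}
       = card {T. T \<subseteq> A - {x} \<and> card T = k - 1 \<and> Q (insert x T)}"
proof -
  let ?L = "{S. S \<subseteq> A \<and> card S = k \<and> x \<in> S \<and> Q S}"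
  let ?R = "{T. T \<subseteq> A - {x} \<and> card T = k - 1 \<and> Q (insert x T)}"
  have inj: "inj_on (insert x) ?R" unfolding inj_on_def by blast
  have img: "insert x ` ?R = ?L"
  proof
    show "insert x ` ?R \<subseteq> ?L"
    proof
      fix S assume "S \<in> insert x ` ?R"
      then obtain T where T: "T \<in> ?R" "S = insert x T" by blast
      have "finite T" using T(1) assms(1) finite_subset by blast
      moreover have "x \<notin> T" using T(1) by blast
      ultimately have "card S = k" using T assms(3) by simp
      then show "S \<in> ?L" using T assms(2) by auto
    qed
  next
    show "?L \<subseteq> insert x ` ?R"
    proof
      fix S assume S: "S \<in> ?L"
      have "finite S" using S assms(1) finite_subset by blast
      then have "card (S - {x}) = k - 1" using S by simp
      moreover have "insert x (S - {x}) = S" using S by blast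
      ultimately have "S - {x} \<in> ?R" using S by auto
      then show "S \<in> insert x ` ?R" using \<open>insert x (S - {x}) = S\<close> by (metis image_eqI)
    qed
  qed
  show ?thesis using card_image[OF inj] img by simp
qed

lemma N1:
  assumes "finite A" "x \<in> A" "1 \<le> k"
  shows "card A * card {S. S \<subseteq> A \<and> card S = k \<and> x \<in> S} = k * (card A choose k)"
proof -
  have "card {S. S \<subseteq> A \<and> card S = k \<and> x \<in> S} = card {S. S \<subseteq> A \<and> card S = k \<and> x \<in> S \<and> True}" by simp
  also have "\<dots> = card {T. T \<subseteq> A - {x} \<and> card T = k - 1}" using count1[OF assms, of "\<lambda>_. True"] by simp
  also have "\<dots> = (card A - 1) choose (k - 1)" using n_subsets[of "A - {x}"] assms by simp
  finally show ?thesis using times_binomial_minus1_eq[of k "card A"] assms by simp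
qed

lemma N2:
  assumes "finite A" "x \<in> A" "y \<in> A" "x \<noteq> y" "2 \<le> k"
  shows "card A * (card A - 1) * card {S. S \<subseteq> A \<and> card S = k \<and> x \<in> S \<and> y \<in> S}
     = k * (k - 1) * (card A choose k)"
proof -
  have "card {S. S \<subseteq> A \<and> card S = k \<and> x \<in> S \<and> y \<in> S}
      = card {T. T \<subseteq> A - {x} \<and> card T = k - 1 \<and> y \<in> insert x T}"
    using count1[OF assms(1,2), of k "\<lambda>S. y \<in> S"] assms by simp
  also have "{T. T \<subseteq> A - {x} \<and> card T = k - 1 \<and> y \<in> insert x T} = {T. T \<subseteq> A - {x} \<and> card T = k - 1 \<and> y \<in> T}"
    using assms(4) by auto
  finally have e: "card {S. S \<subseteq> A \<and> card S = k \<and> x \<in> S \<and> y \<in> S} = card {T. T \<subseteq> A - {x} \<and> card T = k - 1 \<and> y \<in> T}" .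
  have "card (A - {x}) * card {T. T \<subseteq> A - {x} \<and> card T = k - 1 \<and> y \<in> T} = (k - 1) * (card (A - {x}) choose (k - 1))"
    using N1[of "A - {x}" y "k - 1"] assms by simp
  then have "(card A - 1) * card {S. S \<subseteq> A \<and> card S = k \<and> x \<in> S \<and> y \<in> S} = (k - 1) * ((card A - 1) choose (k - 1))"
    using e assms by simp
  then have "card A * ((card A - 1) * card {S. S \<subseteq> A \<and> card S = k \<and> x \<in> S \<and> y \<in> S}) = (k - 1) * (card A * ((card A - 1) choose (k - 1)))"
    by (metis mult.left_commute)
  also have "card A * ((card A - 1) choose (k - 1)) = k * (card A choose k)"
    using times_binomial_minus1_eq[of k "card A"] assms by simp
  finally show ?thesis by (simp add: ac_simps)
qed

definition aS :: "nat \<Rightarrow> (nat \<Rightarrow> real) \<Rightarrow> nat set \<Rightarrow> real" where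
  "aS n x S = (\<Sum>i<n. if i \<in> S then x i else 0)"

lemma finite_S_rows: "finite (S_rows n k)"
  unfolding S_rows_def by (rule finite_subset[of _ "Pow {..<n}"]) auto

lemma card_S_rows: "card (S_rows n k) = n choose k"
  unfolding S_rows_def using n_subsets[of "{..<n}" k] by simp

lemma cnt1:
  assumes "i < n" "1 \<le> k"
  shows "real n * card {S \<in> S_rows n k. i \<in> S} = real k * (n choose k)"
proof -
  have "{S \<in> S_rows n k. i \<in> S} = {S. S \<subseteq> {..<n} \<and> card S = k \<and> i \<in> S}"
    unfolding S_rows_def by auto
  then show ?thesis using N1[of "{..<n}" i k] assms
    by (metis card_lessThan finite_lessThan lessThan_iff of_nat_mult)
qed

lemma cnt2:
  assumes "i < n" "j < n" "i \<noteq> j" "2 \<le> k"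
  shows "real n * (real n - 1) * card {S \<in> S_rows n k. i \<in> S \<and> j \<in> S} = real k * (real k - 1) * (n choose k)"
proof -
  have "{S \<in> S_rows n k. i \<in> S \<and> j \<in> S} = {S. S \<subseteq> {..<n} \<and> card S = k \<and> i \<in> S \<and> j \<in> S}"
    unfolding S_rows_def by auto
  moreover have "n \<ge> 1" "k \<ge> 1" using assms by simp_all
  moreover have "n * (n - 1) * card {S. S \<subseteq> {..<n} \<and> card S = k \<and> i \<in> S \<and> j \<in> S} = k * (k - 1) * (n choose k)"
    using N2[of "{..<n}" i j k] assms by simp
  then have "real (n * (n - 1) * card {S. S \<subseteq> {..<n} \<and> card S = k \<and> i \<in> S \<and> j \<in> S}) = real (k * (k - 1) * (n choose k))"
    by (simp only:)
  ultimately show ?thesis by (simp add: of_nat_diff)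
qed

lemma sum_aS:
  assumes "1 \<le> k"
  shows "real n * (\<Sum>S\<in>S_rows n k. aS n x S) = real k * (n choose k) * (\<Sum>i<n. x i)"
proof -
  have "(\<Sum>S\<in>S_rows n k. aS n x S) = (\<Sum>i<n. \<Sum>S\<in>S_rows n k. if i \<in> S then x i else 0)"
    unfolding aS_def by (rule sum.swap)
  also have "\<dots> = (\<Sum>i<n. real (card {S \<in> S_rows n k. i \<in> S}) * x i)"
    by (simp add: sum.inter_filter[symmetric] finite_S_rows)
  finally have "real n * (\<Sum>S\<in>S_rows n k. aS n x S) = (\<Sum>i<n. x i * (real n * card {S \<in> S_rows n k. i \<in> S}))"
    by (simp add: sum_distrib_left ac_simps)
  also have "\<dots> = (\<Sum>i<n. x i * (real k * (n choose k)))"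
    using cnt1 assms by (intro sum.cong) auto
  finally show ?thesis by (simp add: sum_distrib_left sum_distrib_right ac_simps)
qed

lemma sum_aS2:
  assumes "2 \<le> k"
  shows "real n * (real n - 1) * (\<Sum>S\<in>S_rows n k. (aS n x S)^2)
     = real k * (n choose k) * ((real n - real k) * (\<Sum>i<n. (x i)^2) + (real k - 1) * (\<Sum>i<n. x i)^2)"
proof -
  let ?N = "real (n choose k)"
  have sq: "(aS n x S)^2 = (\<Sum>i<n. \<Sum>j<n. x i * x j * (if i \<in> S \<and> j \<in> S then 1 else 0))" for S
    unfolding aS_def power2_eq_square sum_product by (intro sum.cong refl) auto
  have "(\<Sum>S\<in>S_rows n k. (aS n x S)^2) = (\<Sum>i<n. \<Sum>j<n. \<Sum>S\<in>S_rows n k. x i * x j * (if i \<in> S \<and> j \<in> S then 1 else 0))"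
    unfolding sq by (subst sum.swap) (intro sum.cong refl sum.swap)
  also have "\<dots> = (\<Sum>i<n. \<Sum>j<n. x i * x j * card {S \<in> S_rows n k. i \<in> S \<and> j \<in> S})"
    by (simp add: sum_distrib_left[symmetric] sum.inter_filter[symmetric] finite_S_rows)
  finally have "real n * (real n - 1) * (\<Sum>S\<in>S_rows n k. (aS n x S)^2)
     = (\<Sum>i<n. \<Sum>j<n. x i * x j * (real n * (real n - 1) * card {S \<in> S_rows n k. i \<in> S \<and> j \<in> S}))"
    by (simp add: sum_distrib_left ac_simps)
  also have "\<dots> = (\<Sum>i<n. \<Sum>j<n. x i * x j * ((if i = j then (real n - real k) * real k * ?N else 0) + real k * (real k - 1) * ?N))"
  proof (intro sum.cong refl)
    fix i j assume ij: "i \<in> {..<n}" "j \<in> {..<n}"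
    show "x i * x j * (real n * (real n - 1) * card {S \<in> S_rows n k. i \<in> S \<and> j \<in> S}) =
      x i * x j * ((if i = j then (real n - real k) * real k * ?N else 0) + real k * (real k - 1) * ?N)"
    proof (cases "i = j")
      case True
      have "real n * card {S \<in> S_rows n k. i \<in> S} = real k * ?N" using cnt1[of i n k] ij assms by simp
      have "real n * (real n - 1) * card {S \<in> S_rows n k. i \<in> S} = (real n - 1) * (real n * card {S \<in> S_rows n k. i \<in> S})"
        by (simp only: ac_simps)
      also have "\<dots> = (real n - 1) * (real k * ?N)" using \<open>real n * card {S \<in> S_rows n k. i \<in> S} = real k * ?N\<close> by simp
      also have "\<dots> = (real n - real k) * real k * ?N + real k * (real k - 1) * ?N" by (simp add: algebra_simps)
      finally have "real n * (real n - 1) * card {S \<in> S_rows n k. i \<in> S} = (real n - real k) * real k * ?N + real k * (real k - 1) * ?N" .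
      then show ?thesis using True by simp
    next
      case False
      then show ?thesis using cnt2[of i n j k] ij assms by simp
    qed
  qed
  also have "\<dots> = (real n - real k) * real k * ?N * (\<Sum>i<n. (x i)^2) + real k * (real k - 1) * ?N * (\<Sum>i<n. x i)^2"
  proof -
    have e1: "(\<Sum>i<n. \<Sum>j<n. x i * x j * ((if i = j then (real n - real k) * real k * ?N else 0) + real k * (real k - 1) * ?N))
      = (\<Sum>i<n. \<Sum>j<n. (if i = j then x i * x j * ((real n - real k) * real k * ?N) else 0)) + (\<Sum>i<n. \<Sum>j<n. x i * x j * (real k * (real k - 1) * ?N))"
      unfolding sum.distrib[symmetric] by (intro sum.cong refl) (simp add: algebra_simps)
    have e2: "(\<Sum>i<n. \<Sum>j<n. (if i = j then x i * x j * ((real n - real k) * real k * ?N) else 0)) = (real n - real k) * real k * ?N * (\<Sum>i<n. (x i)^2)"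
      by (simp add: sum_distrib_left power2_eq_square ac_simps)
    have e3: "(\<Sum>i<n. \<Sum>j<n. x i * x j * (real k * (real k - 1) * ?N)) = real k * (real k - 1) * ?N * (\<Sum>i<n. x i)^2"
      by (simp add: power2_eq_square sum_product sum_distrib_left ac_simps)
    show ?thesis using e1 e2 e3 by simp
  qed
  finally show ?thesis by (simp add: algebra_simps)
qed

definition cf :: "nat \<Rightarrow> nat \<Rightarrow> nat set \<Rightarrow> nat \<Rightarrow> real" where
  "cf n k S i = (if i \<in> S then real n - real k else - real k)"

lemma cf_sum: "(\<Sum>i<n. cf n k S i * x i) = real n * aS n x S - real k * (\<Sum>i<n. x i)"
proof -
  have "(\<Sum>i<n. cf n k S i * x i) = (\<Sum>i<n. real n * (if i \<in> S then x i else 0) - real k * x i)"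
    unfolding cf_def by (intro sum.cong refl) (simp add: algebra_simps)
  then show ?thesis unfolding aS_def by (simp add: sum_subtractf sum_distrib_left)
qed

lemma variance:
  assumes "2 \<le> k" "k \<le> n"
  shows "(\<Sum>S\<in>S_rows n k. (\<Sum>i<n. cf n k S i * x i)^2) \<le> real n * real k * (n choose k) * (\<Sum>i<n. (x i)^2)"
proof -
  let ?N = "real (n choose k)"
  define T where "T = (\<Sum>i<n. x i)"
  define P where "P = (\<Sum>i<n. (x i)^2)"
  define A1 where "A1 = (\<Sum>S\<in>S_rows n k. aS n x S)"
  define A2 where "A2 = (\<Sum>S\<in>S_rows n k. (aS n x S)^2)"
  have h1: "real n * A1 = real k * ?N * T" unfolding A1_def T_def using sum_aS[of k n x] assms by simp
  have h2: "real n * (real n - 1) * A2 = real k * ?N * ((real n - real k) * P + (real k - 1) * T^2)"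
    unfolding A2_def P_def T_def using sum_aS2[of k n x] assms by simp
  have "(\<Sum>S\<in>S_rows n k. (\<Sum>i<n. cf n k S i * x i)^2) = (\<Sum>S\<in>S_rows n k. (real n)^2 * (aS n x S)^2 - 2 * real n * real k * T * aS n x S + (real k)^2 * T^2)"
    unfolding cf_sum T_def by (intro sum.cong refl) (simp add: power2_eq_square algebra_simps)
  also have "\<dots> = (real n)^2 * A2 - 2 * real k * T * (real n * A1) + ?N * (real k)^2 * T^2"
  proof -
    have "(\<Sum>S\<in>S_rows n k. (real n)^2 * (aS n x S)^2 - 2 * real n * real k * T * aS n x S + (real k)^2 * T^2)
       = (\<Sum>S\<in>S_rows n k. (real n)^2 * (aS n x S)^2) - (\<Sum>S\<in>S_rows n k. 2 * real n * real k * T * aS n x S) + (\<Sum>S\<in>S_rows n k. (real k)^2 * T^2)"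
      by (simp only: sum.distrib sum_subtractf)
    also have "\<dots> = (real n)^2 * A2 - 2 * real n * real k * T * A1 + ?N * ((real k)^2 * T^2)"
      unfolding A1_def A2_def sum_distrib_left[symmetric] by (simp add: card_S_rows)
    finally show ?thesis by (simp add: algebra_simps)
  qed
  finally have L: "(\<Sum>S\<in>S_rows n k. (\<Sum>i<n. cf n k S i * x i)^2) = (real n)^2 * A2 - 2 * real k * T * (real n * A1) + ?N * (real k)^2 * T^2" .
  have "(real n - 1) * ((real n)^2 * A2 - 2 * real k * T * (real n * A1) + ?N * (real k)^2 * T^2)
      = real n * (real n * (real n - 1) * A2) - 2 * real k * T * (real n - 1) * (real n * A1) + (real n - 1) * ?N * (real k)^2 * T^2"
    by (simp add: power2_eq_square algebra_simps)
  also have "\<dots> = real n * (real k * ?N * ((real n - real k) * P + (real k - 1) * T^2)) - 2 * real k * T * (real n - 1) * (real k * ?N * T) + (real n - 1) * ?N * (real k)^2 * T^2"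
    by (simp only: h1 h2)
  also have "\<dots> = real n * real k * ?N * (real n - real k) * P - real k * ?N * (real n - real k) * T^2"
    by (simp add: power2_eq_square algebra_simps)
  also have "\<dots> \<le> real n * real k * ?N * (real n - real k) * P"
  proof -
    have "0 \<le> real k * ?N * (real n - real k) * T^2" using assms by simp
    then show ?thesis by linarith
  qed
  also have "\<dots> \<le> real n * real k * ?N * (real n - 1) * P"
  proof -
    have "0 \<le> real n * real k * ?N * P" unfolding P_def by (simp add: sum_nonneg)
    moreover have "real n - real k \<le> real n - 1" using assms by simp
    ultimately have "(real n * real k * ?N * P) * (real n - real k) \<le> (real n * real k * ?N * P) * (real n - 1)"
      by (intro mult_left_mono) (simp_all only:)
    then show ?thesis by (simp only: ac_simps)
  qed
  finally have "(real n - 1) * ((real n)^2 * A2 - 2 * real k * T * (real n * A1) + ?N * (real k)^2 * T^2) \<le> (real n - 1) * (real n * real k * ?N * P)"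
    by (simp add: algebra_simps)
  moreover have "real n - 1 > 0" using assms by simp
  ultimately show ?thesis unfolding L P_def using mult_le_cancel_left_pos[of "real n - 1"] by blast
qed

lemma sum_if_const:
  assumes "S \<subseteq> {..<n}"
  shows "(\<Sum>i<n. if i \<in> S then a else b) = real (card S) * a + (real n - real (card S)) * (b::real)"
proof -
  have "(\<Sum>i<n. if i \<in> S then a else b) = sum (\<lambda>_. a) ({..<n} \<inter> {i. i \<in> S}) + sum (\<lambda>_. b) ({..<n} \<inter> - {i. i \<in> S})"
    by (rule sum.If_cases) simp
  also have "{..<n} \<inter> {i. i \<in> S} = S" using assms by auto
  also have "{..<n} \<inter> - {i. i \<in> S} = {..<n} - S" by auto
  also have "card ({..<n} - S) = n - card S" using assms by (simp add: card_Diff_subset finite_subset)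
  moreover have "card S \<le> n" using assms by (metis card_lessThan card_mono finite_lessThan)
  ultimately show ?thesis by (simp add: of_nat_diff)
qed

lemma dinner_CS: "(dinner d u z)^2 \<le> dinner d u u * dinner d z z"
  unfolding dinner_def using Cauchy_Schwarz_ineq_sum[of u z "{..<d}"] by (simp add: power2_eq_square)

lemma upper:
  assumes emb: "rd_embedding d (S_rows n k) n S_mat m" and k: "2 \<le> k" "k < n"
  shows "4 * real k * (real n - real k)^2 * m^2 \<le> (real n)^2"
proof -
  let ?R = "S_rows n k"
  let ?N = "real (n choose k)"
  from emb obtain U V where m0: "m \<ge> 0" and U: "\<forall>j\<in>?R. unitvec d (U j)" and V: "\<forall>i<n. unitvec d (V i)"
    and E: "\<forall>j\<in>?R. \<forall>i<n. (S_mat j i \<longrightarrow> dinner d (U j) (V i) \<ge> m) \<and> (\<not> S_mat j i \<longrightarrow> dinner d (U j) (V i) \<le> - m)"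
    unfolding rd_embedding_def by blast
  define Z where "Z S l = (\<Sum>i<n. cf n k S i * V i l)" for S l
  have key: "(2 * real k * (real n - real k) * m)^2 \<le> dinner d (Z S) (Z S)" if S: "S \<in> ?R" for S
  proof -
    have Ssub: "S \<subseteq> {..<n}" and cS: "card S = k" using S unfolding S_rows_def by auto
    have "dinner d (U S) (Z S) = (\<Sum>l<d. \<Sum>i<n. U S l * (cf n k S i * V i l))"
      unfolding dinner_def Z_def by (simp add: sum_distrib_left)
    also have "\<dots> = (\<Sum>i<n. \<Sum>l<d. U S l * (cf n k S i * V i l))" by (rule sum.swap)
    also have "\<dots> = (\<Sum>i<n. cf n k S i * dinner d (U S) (V i))"
      unfolding dinner_def by (intro sum.cong refl) (simp add: sum_distrib_left ac_simps)
    finally have eq: "dinner d (U S) (Z S) = (\<Sum>i<n. cf n k S i * dinner d (U S) (V i))" .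
    have "(\<Sum>i<n. if i \<in> S then (real n - real k) * m else real k * m) \<le> (\<Sum>i<n. cf n k S i * dinner d (U S) (V i))"
    proof (rule sum_mono)
      fix i assume i: "i \<in> {..<n}"
      show "(if i \<in> S then (real n - real k) * m else real k * m) \<le> cf n k S i * dinner d (U S) (V i)"
      proof (cases "i \<in> S")
        case True
        then have "dinner d (U S) (V i) \<ge> m" using E S i unfolding S_mat_def by auto
        moreover have "real n - real k \<ge> 0" using k by simp
        ultimately show ?thesis using True unfolding cf_def by (simp add: mult_left_mono)
      next
        case False
        then have "dinner d (U S) (V i) \<le> - m" using E S i unfolding S_mat_def by auto
        then have "real k * m \<le> real k * (- dinner d (U S) (V i))" by (intro mult_left_mono) auto
        then show ?thesis using False unfolding cf_def by simp
      qed
    qed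
    also have "(\<Sum>i<n. if i \<in> S then (real n - real k) * m else real k * m) = 2 * real k * (real n - real k) * m"
      unfolding sum_if_const[OF Ssub, of "(real n - real k) * m" "real k * m"] cS by (simp add: algebra_simps)
    finally have ge: "2 * real k * (real n - real k) * m \<le> dinner d (U S) (Z S)" using eq by simp
    have nn: "0 \<le> 2 * real k * (real n - real k) * m" using k m0 by simp
    have "(2 * real k * (real n - real k) * m)^2 \<le> (dinner d (U S) (Z S))^2"
      using ge nn by (intro power_mono) auto
    also have "\<dots> \<le> dinner d (U S) (U S) * dinner d (Z S) (Z S)" by (rule dinner_CS)
    also have "dinner d (U S) (U S) = 1" using U S unfolding unitvec_def by auto
    finally show ?thesis by simp
  qed
  have "?N * (2 * real k * (real n - real k) * m)^2 = (\<Sum>S\<in>?R. (2 * real k * (real n - real k) * m)^2)"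
    by (simp add: card_S_rows)
  also have "\<dots> \<le> (\<Sum>S\<in>?R. dinner d (Z S) (Z S))" using key by (rule sum_mono)
  also have "\<dots> = (\<Sum>l<d. \<Sum>S\<in>?R. (\<Sum>i<n. cf n k S i * V i l)^2)"
    unfolding dinner_def Z_def power2_eq_square by (rule sum.swap)
  also have "\<dots> \<le> (\<Sum>l<d. real n * real k * ?N * (\<Sum>i<n. (V i l)^2))"
    using variance[of k n] k by (intro sum_mono) auto
  also have "\<dots> = real n * real k * ?N * (\<Sum>i<n. dinner d (V i) (V i))"
    unfolding dinner_def power2_eq_square sum_distrib_left[symmetric] by (subst sum.swap) (rule refl)
  also have "(\<Sum>i<n. dinner d (V i) (V i)) = real n" using V unfolding unitvec_def by simp
  finally have main: "?N * (2 * real k * (real n - real k) * m)^2 \<le> real n * real k * ?N * real n" .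
  have Npos: "?N > 0" using k by simp
  have "(real k * ?N) * (4 * real k * (real n - real k)^2 * m^2) \<le> (real k * ?N) * (real n)^2"
    using main by (simp add: power2_eq_square algebra_simps)
  moreover have "real k * ?N > 0" using Npos k by simp
  ultimately show ?thesis using mult_le_cancel_left_pos[of "real k * ?N"] by blast
qed

lemma dinner_form:
  assumes "A \<subseteq> {..<n}" "B \<subseteq> {..<n}"
  shows "dinner (Suc n) (\<lambda>l. (if l \<in> A then a else 0) + (if l = n then \<alpha> else 0))
                        (\<lambda>l. (if l \<in> B then b else 0) + (if l = n then \<beta> else 0))
         = real (card (A \<inter> B)) * (a * b) + \<alpha> * \<beta>"
proof -
  have nA: "n \<notin> A" "n \<notin> B" using assms by auto
  have "(\<Sum>l<n. ((if l \<in> A then a else 0) + (if l = n then \<alpha> else 0)) * ((if l \<in> B then b else 0) + (if l = n then \<beta> else 0)))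
      = (\<Sum>l<n. if l \<in> A \<inter> B then a * b else 0)"
    by (intro sum.cong refl) auto
  also have "\<dots> = real (card (A \<inter> B)) * (a * b)"
    using sum_if_const[of "A \<inter> B" n "a * b" 0] assms by auto
  finally show ?thesis unfolding dinner_def using nA by simp
qed

lemma lower:
  assumes k: "1 \<le> k" "k \<le> n"
  shows "rd_embedding (Suc n) (S_rows n k) n S_mat (1 / (2 * sqrt (real k) + 1))"
proof -
  define s where "s = sqrt (real k)"
  define c where "c = 1 / (2 * s + 1)"
  have s1: "s \<ge> 1" unfolding s_def using k by simp
  have ss: "s * s = real k" unfolding s_def by simp
  have c0: "0 < c" "c < 1" unfolding c_def using s1 by auto
  have c2: "1 - c = 2 * s * c" unfolding c_def using s1 by (simp add: field_simps)
  define p where "p = sqrt (1 - c)"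
  define q where "q = sqrt c"
  define u where "u = p / s"
  have pp: "p * p = 1 - c" unfolding p_def using c0 by simp
  have qq: "q * q = c" unfolding q_def using c0 by simp
  define V where "V i = (\<lambda>l. (if l \<in> {i} then p else 0) + (if l = n then q else 0))" for i :: nat
  define U where "U S = (\<lambda>l. (if l \<in> S then u else 0) + (if l = n then - q else 0))" for S :: "nat set"
  have "rd_embedding (Suc n) (S_rows n k) n S_mat c"
    unfolding rd_embedding_def
  proof (intro conjI exI[of _ U] exI[of _ V] ballI allI impI)
    show "0 \<le> c" using c0 by simp
  next
    fix S assume S: "S \<in> S_rows n k"
    then have Ssub: "S \<subseteq> {..<n}" and cS: "card S = k" unfolding S_rows_def by auto
    have "dinner (Suc n) (U S) (U S) = real k * (u * u) + q * q"
      unfolding U_def using dinner_form[OF Ssub Ssub] cS by simp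
    also have "real k * (u * u) = 1 - c" unfolding u_def using pp ss s1 k by (simp add: field_simps)
    finally show "unitvec (Suc n) (U S)" unfolding unitvec_def using qq by simp
  next
    fix i assume i: "i < n"
    have "dinner (Suc n) (V i) (V i) = p * p + q * q"
      unfolding V_def using dinner_form[of "{i}" n "{i}"] i by simp
    then show "unitvec (Suc n) (V i)" unfolding unitvec_def using pp qq by simp
  next
    fix S i assume S: "S \<in> S_rows n k" and i: "i < n"
    then have Ssub: "S \<subseteq> {..<n}" unfolding S_rows_def by auto
    have d: "dinner (Suc n) (U S) (V i) = real (card (S \<inter> {i})) * (u * p) - c"
      unfolding U_def V_def using dinner_form[of S n "{i}"] Ssub i qq by simp
    have up: "u * p = 2 * c" unfolding u_def using pp c2 s1 by (simp add: field_simps)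
    {
      assume "S_mat S i"
      then have "S \<inter> {i} = {i}" unfolding S_mat_def by auto
      then show "c \<le> dinner (Suc n) (U S) (V i)" using d up by simp
    next
      assume "\<not> S_mat S i"
      then have "S \<inter> {i} = {}" unfolding S_mat_def by auto
      then show "dinner (Suc n) (U S) (V i) \<le> - c" using d by simp
    }
  qed
  then show ?thesis unfolding c_def s_def .
qed

theorem corollary1p1:
  shows "\<forall>\<epsilon>>0. \<exists>K::nat. \<exists>\<delta>>0. \<forall>n k::nat. K \<le> k \<and> real k \<le> \<delta> * real n \<longrightarrow>
           (\<exists>r. m_rd_inf (S_rows n k) n S_mat = ereal r \<and>
                \<bar>2 * sqrt (real k) * r - 1\<bar> \<le> \<epsilon>)"
proof (intro allI impI)
  fix \<epsilon> :: real assume e: "\<epsilon> > 0"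
  define K where "K = nat \<lceil>1 / \<epsilon>^2\<rceil> + 2"
  define \<delta> where "\<delta> = min (1/2) (\<epsilon>/2)"
  show "\<exists>K::nat. \<exists>\<delta>>0. \<forall>n k::nat. K \<le> k \<and> real k \<le> \<delta> * real n \<longrightarrow>
           (\<exists>r. m_rd_inf (S_rows n k) n S_mat = ereal r \<and> \<bar>2 * sqrt (real k) * r - 1\<bar> \<le> \<epsilon>)"
  proof (rule exI[of _ K], rule exI[of _ \<delta>], intro conjI allI impI)
    show "\<delta> > 0" unfolding \<delta>_def using e by simp
  next
    fix n k :: nat assume h: "K \<le> k \<and> real k \<le> \<delta> * real n"
    have k2: "2 \<le> k" using h unfolding K_def by simp
    have kK: "1 / \<epsilon>^2 \<le> real k"
    proof -
      have "K \<le> k" using h by simp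
      then have "nat \<lceil>1 / \<epsilon>^2\<rceil> \<le> k" unfolding K_def by linarith
      then have c1: "\<lceil>1 / \<epsilon>^2\<rceil> \<le> int k" by (simp add: nat_le_iff)
      have "1 / \<epsilon>^2 \<le> real_of_int \<lceil>1 / \<epsilon>^2\<rceil>" by (rule le_of_int_ceiling)
      also have "\<dots> \<le> real_of_int (int k)" using c1 by (simp only: of_int_le_iff)
      finally show ?thesis by simp
    qed
    have kn1: "real k \<le> real n / 2" and kn2: "real k \<le> \<epsilon> / 2 * real n"
    proof -
      have "\<delta> * real n \<le> (1/2) * real n" "\<delta> * real n \<le> (\<epsilon>/2) * real n"
        unfolding \<delta>_def by (intro mult_right_mono; simp)+
      then show "real k \<le> real n / 2" "real k \<le> \<epsilon> / 2 * real n" using h by auto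
    qed
    have kn: "k < n" using kn1 k2 by simp
    define sk where "sk = sqrt (real k)"
    have sk1: "sk \<ge> 1" unfolding sk_def using k2 by simp
    have sksq: "sk^2 = real k" unfolding sk_def by simp
    define c where "c = 1 / (2 * sk + 1)"
    define B where "B = real n / (2 * sk * (real n - real k))"
    have nk0: "real n - real k > 0" using kn by simp
    have ubd: "m \<le> B" if "rd_embedding d (S_rows n k) n S_mat m" for d m
    proof -
      have m0: "m \<ge> 0" using that unfolding rd_embedding_def by simp
      have "4 * real k * (real n - real k)^2 * m^2 \<le> (real n)^2" using upper[OF that k2 kn] .
      then have "(2 * sk * (real n - real k) * m)^2 \<le> (real n)^2"
        using sksq by (simp add: power_mult_distrib)
      then have "2 * sk * (real n - real k) * m \<le> real n"
        by (rule power2_le_imp_le) simp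
      then have "m * (2 * sk * (real n - real k)) \<le> real n" by (simp add: ac_simps)
      then show ?thesis unfolding B_def using sk1 nk0 by (simp add: pos_le_divide_eq)
    qed
    have md: "m_rd d (S_rows n k) n S_mat \<le> ereal B" for d
      unfolding m_rd_def using ubd by (auto intro!: Sup_least)
    have up: "m_rd_inf (S_rows n k) n S_mat \<le> ereal B"
      unfolding m_rd_inf_def using md by (rule SUP_least)
    have cemb: "rd_embedding (Suc n) (S_rows n k) n S_mat c"
      using lower[of k n] k2 kn unfolding c_def sk_def by simp
    have "ereal c \<le> m_rd (Suc n) (S_rows n k) n S_mat"
      unfolding m_rd_def using cemb by (auto intro!: Sup_upper)
    also have "\<dots> \<le> m_rd_inf (S_rows n k) n S_mat"
      unfolding m_rd_inf_def by (rule SUP_upper) simp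
    finally have lo: "ereal c \<le> m_rd_inf (S_rows n k) n S_mat" .
    obtain r where r: "m_rd_inf (S_rows n k) n S_mat = ereal r"
      using lo up by (cases "m_rd_inf (S_rows n k) n S_mat") auto
    have cr: "c \<le> r" and rB: "r \<le> B" using lo up r by auto
    have "2 * sk * r \<le> 2 * sk * B" using rB sk1 by simp
    also have "2 * sk * B = real n / (real n - real k)" unfolding B_def using sk1 nk0 by simp
    also have "\<dots> \<le> 1 + \<epsilon>"
    proof -
      have "\<epsilon> * real k \<le> \<epsilon> * (real n / 2)" using kn1 e by (intro mult_left_mono) auto
      then have "real k + \<epsilon> * real k \<le> \<epsilon> * real n" using kn2 by (simp add: field_simps)
      then have "real n \<le> (1 + \<epsilon>) * (real n - real k)" by (simp add: algebra_simps)
      then show ?thesis using nk0 by (simp add: divide_le_eq)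
    qed
    finally have U1: "2 * sk * r - 1 \<le> \<epsilon>" by simp
    have "1 / \<epsilon> \<le> sk" unfolding sk_def
      by (rule real_le_rsqrt) (use kK in \<open>simp add: power_one_over\<close>)
    then have "1 \<le> \<epsilon> * sk" using e by (simp add: divide_le_eq ac_simps)
    then have ce: "c \<le> \<epsilon>" unfolding c_def using e sk1 by (simp add: divide_le_eq algebra_simps)
    have "2 * sk * c = 1 - c" unfolding c_def using sk1 by (simp add: field_simps)
    moreover have "2 * sk * c \<le> 2 * sk * r" using cr sk1 by simp
    ultimately have L1: "1 - \<epsilon> \<le> 2 * sk * r" using ce by linarith
    show "\<exists>r. m_rd_inf (S_rows n k) n S_mat = ereal r \<and> \<bar>2 * sqrt (real k) * r - 1\<bar> \<le> \<epsilon>"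
      using r U1 L1 unfolding sk_def by (intro exI[of _ r]) auto
  qed
qed

end
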